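(* Under the standing assumptions below (for both $k=l$ and $k=r$), let $f(p):=f_l(p)+f_r(p)+u_r-u_l$ for $p>0$, and let $I_k:=\displaystyle\int_0^{p_k}\frac{dq}{\hat\rho_k(q)\,c_k(q,\hat\rho_k(q))}\in(0,+\infty]$. Then there exists a unique $p^*\in(0,\infty)$ with $f(p^* )=0$ if and only if $$u_r-u_l<I_l+I_r.$$
   Context: For each $k\in\{l,r\}$: $\varGamma_k,h_k:(0,\infty)\to\mathbb R$ are twice continuously differentiable and satisfy (C1) $\varGamma_k'\le 0$, $(\rho\varGamma_k(\rho))'\ge 0$, $(\rho\varGamma_k(\rho))''\ge0$; (C2) $\lim_{\rho\to+\infty}\varGamma_k(\rho)=\varGamma_{k,\infty}>0$ and $\varGamma_k(\rho)\le\varGamma_{k,\infty}+2$ for all $\rho>0$; (C3) $h_k'\ge0$, $h_k''\ge0$. Equation of state $p=\varGamma_k(\rho)\rho e+h_k(\rho)$, i.e. $e_k(p,\rho)=\frac{p-h_k(\rho)}{\varGamma_k(\rho)\rho}$; sound speed $c_k(p,\rho)=\sqrt{\left(\frac1\rho+\frac{\varGamma_k'(\rho)}{\varGamma_k(\rho)}\right)(p-h_k(\rho))+\frac p\rho\varGamma_k(\rho)+h_k'(\rho)}$. Initial states $(\rho_l,u_l,p_l)$ and $(\rho_r,u_r,p_r)$ with $\rho_k>0$, $p_k>0$, $u_k\in\mathbb R$, $e_k(p_k,\rho_k)\ge0$. Hugoniot function $\varPhi_k(p,\rho):=\varGamma_k(\rho_k)\rho_k(p-h_k(\rho))-\varGamma_k(\rho)\rho(p_k-h_k(\rho_k))-\tfrac12\varGamma_k(\rho_k)(p+p_k)\varGamma_k(\rho)(\rho-\rho_k)$;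 $\rho_{k,\max}$ is the unique $\rho>\rho_k$ with $(\rho-\rho_k)\varGamma_k(\rho)=2\rho_k$; for $p>p_k$, $\rho_k^H(p)$ is the unique $\rho\in(\rho_k,\rho_{k,\max})$ with $\varPhi_k(p,\rho)=0$. $\hat\rho_k$ is the solution of $\frac{d\hat\rho}{dq}=\frac{1}{c_k(q,\hat\rho)^2}$, $\hat\rho(p_k)=\rho_k$, assumed to exist on $(0,p_k]$ with $\hat\rho_k(q)>0$ and $e_k(q,\hat\rho_k(q))\ge 0$ there. Define $f_k(p)=\int_{p_k}^{p}\frac{dq}{\hat\rho_k(q)c_k(q,\hat\rho_k(q))}$ for $0<p\le p_k$ and $f_k(p)=\left((p-p_k)\left(\frac1{\rho_k}-\frac1{\rho_k^H(p)}\right)\right)^{1/2}$ for $p>p_k$. *)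

theory Defs
  imports "HOL-Analysis.Analysis"
begin

text \<open>Equation of state p = Gamma(rho) rho e + h(rho).  The functions Gamma and h are
  given together with their first and second derivatives (G1, G2 and H1, H2).\<close>

definition eint :: "(real \<Rightarrow> real) \<Rightarrow> (real \<Rightarrow> real) \<Rightarrow> real \<Rightarrow> real \<Rightarrow> real" where
  "eint G H p \<rho> = (p - H \<rho>) / (G \<rho> * \<rho>)"

definition sound :: "(real \<Rightarrow> real) \<Rightarrow> (real \<Rightarrow> real) \<Rightarrow> (real \<Rightarrow> real) \<Rightarrow> (real \<Rightarrow> real)
    \<Rightarrow> real \<Rightarrow> real \<Rightarrow> real" where
  "sound G G1 H H1 p \<rho> =
     sqrt ((1 / \<rho> + G1 \<rho> / G \<rho>) * (p - H \<rho>) + p / \<rho> * G \<rho> + H1 \<rho>)"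

definition eos_assms :: "(real \<Rightarrow> real) \<Rightarrow> (real \<Rightarrow> real) \<Rightarrow> (real \<Rightarrow> real) \<Rightarrow> real
    \<Rightarrow> (real \<Rightarrow> real) \<Rightarrow> (real \<Rightarrow> real) \<Rightarrow> (real \<Rightarrow> real) \<Rightarrow> bool" where
  "eos_assms G G1 G2 Ginf H H1 H2 \<longleftrightarrow>
     (\<forall>\<rho>>0. (G has_real_derivative G1 \<rho>) (at \<rho>)) \<and>
     (\<forall>\<rho>>0. (G1 has_real_derivative G2 \<rho>) (at \<rho>)) \<and>
     continuous_on {0<..} G2 \<and>
     (\<forall>\<rho>>0. (H has_real_derivative H1 \<rho>) (at \<rho>)) \<and>
     (\<forall>\<rho>>0. (H1 has_real_derivative H2 \<rho>) (at \<rho>)) \<and>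
     continuous_on {0<..} H2 \<and>
     (\<forall>\<rho>>0. G1 \<rho> \<le> 0 \<and> G \<rho> + \<rho> * G1 \<rho> \<ge> 0 \<and> 2 * G1 \<rho> + \<rho> * G2 \<rho> \<ge> 0) \<and>
     (G \<longlongrightarrow> Ginf) at_top \<and> Ginf > 0 \<and> (\<forall>\<rho>>0. G \<rho> \<le> Ginf + 2) \<and>
     (\<forall>\<rho>>0. H1 \<rho> \<ge> 0 \<and> H2 \<rho> \<ge> 0)"

definition Phi :: "(real \<Rightarrow> real) \<Rightarrow> (real \<Rightarrow> real) \<Rightarrow> real \<Rightarrow> real \<Rightarrow> real \<Rightarrow> real \<Rightarrow> real" where
  "Phi G H \<rho>k pk p \<rho> =
     G \<rho>k * \<rho>k * (p - H \<rho>) - G \<rho> * \<rho> * (pk - H \<rho>k)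
     - 1/2 * G \<rho>k * (p + pk) * G \<rho> * (\<rho> - \<rho>k)"

definition rho_max :: "(real \<Rightarrow> real) \<Rightarrow> real \<Rightarrow> real" where
  "rho_max G \<rho>k = (THE \<rho>. \<rho> > \<rho>k \<and> (\<rho> - \<rho>k) * G \<rho> = 2 * \<rho>k)"

definition rho_H :: "(real \<Rightarrow> real) \<Rightarrow> (real \<Rightarrow> real) \<Rightarrow> real \<Rightarrow> real \<Rightarrow> real \<Rightarrow> real" where
  "rho_H G H \<rho>k pk p = (THE \<rho>. \<rho>k < \<rho> \<and> \<rho> < rho_max G \<rho>k \<and> Phi G H \<rho>k pk p \<rho> = 0)"

text \<open>The wave curve f_k; rhat is the rarefaction density solving the ODE.
  For p <= p_k, the integral from p_k to p equals minus the integral over [p, p_k].\<close>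
definition fk :: "(real \<Rightarrow> real) \<Rightarrow> (real \<Rightarrow> real) \<Rightarrow> (real \<Rightarrow> real) \<Rightarrow> (real \<Rightarrow> real)
    \<Rightarrow> real \<Rightarrow> real \<Rightarrow> (real \<Rightarrow> real) \<Rightarrow> real \<Rightarrow> real" where
  "fk G G1 H H1 \<rho>k pk rhat p =
     (if p \<le> pk then - integral {p..pk} (\<lambda>q. 1 / (rhat q * sound G G1 H H1 q (rhat q)))
      else sqrt ((p - pk) * (1 / \<rho>k - 1 / rho_H G H \<rho>k pk p)))"

definition Ik :: "(real \<Rightarrow> real) \<Rightarrow> (real \<Rightarrow> real) \<Rightarrow> (real \<Rightarrow> real) \<Rightarrow> (real \<Rightarrow> real)
    \<Rightarrow> real \<Rightarrow> (real \<Rightarrow> real) \<Rightarrow> ereal" where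
  "Ik G G1 H H1 pk rhat =
     enn2ereal (\<integral>\<^sup>+ q \<in> {0<..<pk}. ennreal (1 / (rhat q * sound G G1 H H1 q (rhat q))) \<partial>lborel)"

definition side_assms :: "(real \<Rightarrow> real) \<Rightarrow> (real \<Rightarrow> real) \<Rightarrow> (real \<Rightarrow> real) \<Rightarrow> (real \<Rightarrow> real)
    \<Rightarrow> real \<Rightarrow> real \<Rightarrow> (real \<Rightarrow> real) \<Rightarrow> bool" where
  "side_assms G G1 H H1 \<rho>k pk rhat \<longleftrightarrow>
     \<rho>k > 0 \<and> pk > 0 \<and> eint G H pk \<rho>k \<ge> 0 \<and>
     rhat pk = \<rho>k \<and>
     (\<forall>q\<in>{0<..pk}. (rhat has_real_derivative 1 / (sound G G1 H H1 q (rhat q))\<^sup>2) (at q within {0<..pk})) \<and>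
     (\<forall>q\<in>{0<..pk}. rhat q > 0 \<and> eint G H q (rhat q) \<ge> 0)"

end

theory Submission
  imports Defs
begin

locale side =
  fixes G G1 G2 Ginf H H1 H2 r0 p0 rhat
  assumes eos: "eos_assms G G1 G2 Ginf H H1 H2"
    and sa: "side_assms G G1 H H1 r0 p0 rhat"
begin

lemma dG: "x > 0 \<Longrightarrow> (G has_real_derivative G1 x) (at x)"
  and dG1: "x > 0 \<Longrightarrow> (G1 has_real_derivative G2 x) (at x)"
  and dH: "x > 0 \<Longrightarrow> (H has_real_derivative H1 x) (at x)"
  and dH1: "x > 0 \<Longrightarrow> (H1 has_real_derivative H2 x) (at x)"
  and C1: "x > 0 \<Longrightarrow> G1 x \<le> 0 \<and> G x + x * G1 x \<ge> 0"
  and lim: "(G \<longlongrightarrow> Ginf) at_top" and Ginf: "Ginf > 0"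
  and C3: "x > 0 \<Longrightarrow> H1 x \<ge> 0"
  using eos unfolding eos_assms_def by auto

lemma r0: "r0 > 0" and p0: "p0 > 0" and e0: "eint G H p0 r0 \<ge> 0" and rh0: "rhat p0 = r0"
  and drh: "q \<in> {0<..p0} \<Longrightarrow> (rhat has_real_derivative 1 / (sound G G1 H H1 q (rhat q))\<^sup>2) (at q within {0<..p0})"
  and rhpos: "q \<in> {0<..p0} \<Longrightarrow> rhat q > 0" and rhe: "q \<in> {0<..p0} \<Longrightarrow> eint G H q (rhat q) \<ge> 0"
  using sa unfolding side_assms_def by auto

lemma cG: "x > 0 \<Longrightarrow> isCont G x" using dG DERIV_isCont by blast
lemma cG1: "x > 0 \<Longrightarrow> isCont G1 x" using dG1 DERIV_isCont by blast
lemma cH: "x > 0 \<Longrightarrow> isCont H x" using dH DERIV_isCont by blast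
lemma cH1: "x > 0 \<Longrightarrow> isCont H1 x" using dH1 DERIV_isCont by blast

lemma G_anti: assumes "0 < x" "x \<le> y" shows "G y \<le> G x"
proof (rule DERIV_nonpos_imp_nonincreasing[OF assms(2)])
  fix z assume "x \<le> z" "z \<le> y"
  then have z: "z > 0" using assms by simp
  show "\<exists>d. (G has_real_derivative d) (at z) \<and> d \<le> 0"
    using dG[OF z] C1[OF z] by blast
qed

lemma G_ge: assumes "x > 0" shows "G x \<ge> Ginf"
proof (rule ccontr)
  assume "\<not> ?thesis"
  then have "G x < Ginf" by simp
  from order_tendstoD(1)[OF lim this] obtain N where N: "\<And>y. y \<ge> N \<Longrightarrow> G y > G x"
    unfolding eventually_at_top_linorder by blast
  have "G (max x N) > G x" using N by simp
  moreover have "G (max x N) \<le> G x" using G_anti assms by simp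
  ultimately show False by simp
qed

lemma G_pos: "x > 0 \<Longrightarrow> G x > 0" using G_ge Ginf by force

definition psi where "psi r = (r - r0) * G r"
definition D where "D r = G r0 * r0 - 1/2 * G r0 * psi r"
definition N where "N r = G r0 * r0 * H r + G r * r * (p0 - H r0) + 1/2 * G r0 * p0 * psi r"
definition P where "P r = N r / D r"

lemma Phi_eq: "Phi G H r0 p0 p r = p * D r - N r"
  unfolding Phi_def D_def N_def psi_def by (simp add: algebra_simps divide_simps)

lemma dpsi: "x > 0 \<Longrightarrow> (psi has_real_derivative G x + (x - r0) * G1 x) (at x)"
  unfolding psi_def[abs_def] by (auto intro!: derivative_eq_intros dG)

lemma dpsi_pos: assumes "x \<ge> r0" shows "G x + (x - r0) * G1 x > 0"
proof -
  have x: "x > 0" using assms r0 by simp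
  have e: "G x + (x - r0) * G1 x = (G x + x * G1 x) + r0 * (- G1 x)" by (simp add: algebra_simps)
  show ?thesis
  proof (cases "G1 x = 0")
    case True then show ?thesis using G_pos[OF x] by simp
  next
    case False
    then have "G1 x < 0" using C1[OF x] by simp
    then have "r0 * (- G1 x) > 0" using r0 mult_pos_pos[of r0 "- G1 x"] by simp
    then show ?thesis using e C1[OF x] by linarith
  qed
qed

lemma psi_strict: assumes "r0 \<le> a" "a < b" shows "psi a < psi b"
proof (rule DERIV_pos_imp_increasing[OF assms(2)])
  fix x assume x: "a \<le> x" "x \<le> b"
  then have z: "x > 0" "x \<ge> r0" using assms r0 by auto
  show "\<exists>y. (psi has_real_derivative y) (at x) \<and> y > 0"
    using dpsi[OF z(1)] dpsi_pos[OF z(2)] by blast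
qed

lemma psi_mono: assumes "r0 \<le> a" "a \<le> b" shows "psi a \<le> psi b"
  using psi_strict assms by (cases "a = b") (auto simp: less_imp_le)

lemma cpsi: "x > 0 \<Longrightarrow> isCont psi x" using dpsi DERIV_isCont by blast

lemma psi0: "psi r0 = 0" by (simp add: psi_def)

lemma g_mono: assumes "0 < a" "a \<le> b" shows "G a * a \<le> G b * b"
proof -
  have "\<And>x. a \<le> x \<Longrightarrow> x \<le> b \<Longrightarrow> \<exists>y. ((\<lambda>r. G r * r) has_real_derivative y) (at x) \<and> y \<ge> 0"
  proof -
    fix x assume x: "a \<le> x" "x \<le> b"
    then have xp: "x > 0" using assms by simp
    have "((\<lambda>r. G r * r) has_real_derivative G1 x * x + G x) (at x)"
      by (auto intro!: derivative_eq_intros dG xp)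
    moreover have "G1 x * x + G x \<ge> 0" using C1[OF xp] by (simp add: algebra_simps)
    ultimately show "\<exists>y. ((\<lambda>r. G r * r) has_real_derivative y) (at x) \<and> y \<ge> 0" by blast
  qed
  then show ?thesis using DERIV_nonneg_imp_nondecreasing[OF assms(2)] by blast
qed

lemma H_mono: assumes "0 < a" "a \<le> b" shows "H a \<le> H b"
proof -
  have "\<And>x. a \<le> x \<Longrightarrow> x \<le> b \<Longrightarrow> \<exists>y. (H has_real_derivative y) (at x) \<and> y \<ge> 0"
  proof -
    fix x assume "a \<le> x" "x \<le> b"
    then have x: "x > 0" using assms by simp
    show "\<exists>y. (H has_real_derivative y) (at x) \<and> y \<ge> 0" using dH[OF x] C3[OF x] by blast
  qed
  then show ?thesis using DERIV_nonneg_imp_nondecreasing[OF assms(2)] by blast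
qed

lemma ph0: "p0 - H r0 \<ge> 0"
  using e0 mult_pos_pos[OF G_pos[OF r0] r0] by (auto simp add: eint_def zero_le_divide_iff)

lemma rm_ex1: "\<exists>!r. r > r0 \<and> (r - r0) * G r = 2 * r0"
proof -
  define b where "b = r0 + 2 * r0 / Ginf"
  have b: "b > r0" using r0 Ginf by (simp add: b_def)
  have "psi b = (2 * r0 / Ginf) * G b" by (simp add: psi_def b_def)
  also have "\<dots> \<ge> (2 * r0 / Ginf) * Ginf"
    using G_ge[of b] b r0 Ginf by (intro mult_left_mono) auto
  finally have pb: "psi b \<ge> 2 * r0" using Ginf by simp
  have "continuous_on {r0..b} psi"
    using cpsi r0 by (intro continuous_at_imp_continuous_on) auto
  then obtain x where x: "r0 \<le> x" "x \<le> b" "psi x = 2 * r0"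
    using IVT'[of psi r0 "2*r0" b] psi0 r0 pb b by auto
  then have "x \<noteq> r0" using psi0 r0 by auto
  with x have ex: "x > r0 \<and> (x - r0) * G x = 2 * r0" by (simp add: psi_def)
  show ?thesis
  proof (rule ex1I[of _ x])
    show "x > r0 \<and> (x - r0) * G x = 2 * r0" using ex .
  next
    fix y assume y: "y > r0 \<and> (y - r0) * G y = 2 * r0"
    show "y = x"
    proof (rule ccontr)
      assume "y \<noteq> x"
      then have "y < x \<or> x < y" by auto
      then show False using psi_strict[of y x] psi_strict[of x y] x y ex
        by (auto simp: psi_def)
    qed
  qed
qed

definition rm where "rm = rho_max G r0"

lemma rm: "rm > r0" "psi rm = 2 * r0"
  using theI'[OF rm_ex1] unfolding rm_def rho_max_def psi_def by auto

lemma D_pos: assumes "r0 \<le> r" "r < rm" shows "D r > 0"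
proof -
  have "psi r < 2 * r0" using psi_strict[OF assms] rm by simp
  then show ?thesis using G_pos[OF r0] unfolding D_def by (simp add: algebra_simps)
qed

lemma D_rm: "D rm = 0" using rm by (simp add: D_def)

lemma D_anti: assumes "r0 \<le> a" "a \<le> b" shows "D b \<le> D a"
  using psi_mono[OF assms] G_pos[OF r0] unfolding D_def by simp

lemma N_strict: assumes "r0 \<le> a" "a < b" shows "N a < N b"
proof -
  have a: "a > 0" using assms r0 by simp
  have "G r0 * r0 * H a \<le> G r0 * r0 * H b"
    using H_mono[OF a] assms G_pos[OF r0] r0 by (intro mult_left_mono) auto
  moreover have "G a * a * (p0 - H r0) \<le> G b * b * (p0 - H r0)"
    using g_mono[OF a] assms ph0 by (intro mult_right_mono) auto
  moreover have "1/2 * G r0 * p0 * psi a < 1/2 * G r0 * p0 * psi b"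
    using psi_strict[OF assms] G_pos[OF r0] p0 by simp
  ultimately show ?thesis unfolding N_def by linarith
qed

lemma N_r0: "N r0 = G r0 * r0 * p0"
  by (simp add: N_def psi0 algebra_simps)

lemma N_pos: assumes "r0 \<le> r" shows "N r > 0"
proof -
  have "N r0 > 0" using N_r0 G_pos[OF r0] r0 p0 by simp
  then show ?thesis using N_strict[of r0 r] assms by (cases "r = r0") auto
qed

lemma P_r0: "P r0 = p0"
  using G_pos[OF r0] r0 by (simp add: P_def N_r0 D_def psi0)

lemma P_strict: assumes "r0 \<le> a" "a < b" "b < rm" shows "P a < P b"
  unfolding P_def
  using N_strict[OF assms(1,2)] N_pos[OF assms(1)] D_pos[of b] D_anti[of a b] assms
  by (intro frac_less) auto

lemma cN: "x > 0 \<Longrightarrow> isCont N x"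
  unfolding N_def[abs_def] by (intro continuous_intros cH cG cpsi) auto
lemma cD: "x > 0 \<Longrightarrow> isCont D x"
  unfolding D_def[abs_def] by (intro continuous_intros cpsi) auto
lemma cP: assumes "r0 \<le> x" "x < rm" shows "isCont P x"
proof -
  have "D x > 0" using D_pos assms by simp
  moreover have "x > 0" using assms r0 by simp
  ultimately show ?thesis unfolding P_def[abs_def] by (intro continuous_intros cN cD) auto
qed


lemma Phi_iff: assumes "r0 \<le> r" "r < rm" shows "Phi G H r0 p0 p r = 0 \<longleftrightarrow> P r = p"
  using D_pos[OF assms] unfolding Phi_eq P_def by (auto simp: divide_eq_eq algebra_simps)

lemma P_inj: assumes "r0 \<le> a" "r0 \<le> b" "a < rm" "b < rm" "P a = P b" shows "a = b"
proof (rule ccontr)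
  assume "a \<noteq> b"
  then have "a < b \<or> b < a" by auto
  then show False using P_strict[of a b] P_strict[of b a] assms by auto
qed

lemma P_ex: assumes p: "p > p0" shows "\<exists>r. r0 < r \<and> r < rm \<and> P r = p"
proof -
  have Nr0: "N r0 > 0" using N_pos by simp
  have pp: "p > 0" using p p0 by simp
  have "isCont D rm" using cD rm r0 by simp
  then have "D \<midarrow>rm\<rightarrow> 0" using D_rm by (simp add: isCont_def)
  then obtain s where s: "s > 0" "\<And>x. x \<noteq> rm \<and> norm (x - rm) < s \<Longrightarrow> norm (D x - 0) < N r0 / p"
  proof -
    have "N r0 / p > 0" using Nr0 pp by simp
    then show ?thesis using that \<open>D \<midarrow>rm\<rightarrow> 0\<close> unfolding LIM_eq by blast
  qed
  define m where "m = min s (rm - r0)"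
  define r1 where "r1 = rm - m / 2"
  have mm: "m > 0" "m \<le> s" "m \<le> rm - r0" using s rm by (auto simp: m_def)
  have r1a: "r0 < r1" unfolding r1_def using mm rm by linarith
  have r1b: "r1 < rm" unfolding r1_def using mm by linarith
  have r1c: "norm (r1 - rm) < s" unfolding r1_def using mm by simp
  note r1 = r1a r1b r1c
  have D1: "D r1 < N r0 / p" using s(2)[of r1] r1 by auto
  have D1p: "D r1 > 0" using D_pos r1 by simp
  have "p < N r0 / D r1" using D1 D1p pp by (simp add: field_simps)
  also have "\<dots> \<le> N r1 / D r1" using N_strict[of r0 r1] r1 D1p by (simp add: divide_right_mono)
  finally have pr1: "p \<le> P r1" by (simp add: P_def)
  have "continuous_on {r0..r1} P" using cP r1 by (intro continuous_at_imp_continuous_on) auto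
  then obtain x where x: "r0 \<le> x" "x \<le> r1" "P x = p"
    using IVT'[of P r0 p r1] P_r0 p pr1 r1 by auto
  then have "x \<noteq> r0" using P_r0 p by auto
  then have "r0 < x" "x < rm" using x r1 by auto
  then show ?thesis using x(3) by blast
qed

lemma rH_ex1: assumes "p > p0" shows "\<exists>!r. r0 < r \<and> r < rm \<and> Phi G H r0 p0 p r = 0"
proof -
  obtain x where x: "r0 < x" "x < rm" "P x = p" using P_ex[OF assms] by blast
  show ?thesis
  proof (rule ex1I[of _ x])
    show "r0 < x \<and> x < rm \<and> Phi G H r0 p0 p x = 0" using x Phi_iff by simp
  next
    fix y assume "r0 < y \<and> y < rm \<and> Phi G H r0 p0 p y = 0"
    then show "y = x" using Phi_iff[of y] x P_inj[of y x] by auto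
  qed
qed

definition rH where "rH p = rho_H G H r0 p0 p"

lemma rH: assumes "p > p0" shows "r0 < rH p" "rH p < rm" "P (rH p) = p"
proof -
  have "r0 < rH p \<and> rH p < rm \<and> Phi G H r0 p0 p (rH p) = 0"
    using theI'[OF rH_ex1[OF assms]] unfolding rH_def rho_H_def rm_def by simp
  then show "r0 < rH p" "rH p < rm" "P (rH p) = p" using Phi_iff by auto
qed

lemma rH_P: assumes "r0 < r" "r < rm" shows "rH (P r) = r"
proof -
  have "P r > p0" using P_strict[of r0 r] assms P_r0 by simp
  from rH[OF this] show ?thesis using P_inj[of "rH (P r)" r] assms by auto
qed

lemma rH_strict: assumes "p0 < p" "p < q" shows "rH p < rH q"
proof (rule ccontr)
  assume "\<not> ?thesis"
  then have "rH q \<le> rH p" by simp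
  then have "P (rH q) \<le> P (rH p)" using P_strict[of "rH q" "rH p"] rH[of p] rH[of q] assms
    by (cases "rH q = rH p") auto
  then show False using rH[of p] rH[of q] assms by simp
qed

lemma rH_cont: assumes "p > p0" shows "isCont rH p"
proof -
  let ?x = "rH p"
  have x: "r0 < ?x" "?x < rm" "P ?x = p" using rH[OF assms] by auto
  have "isCont rH (P ?x)"
    by (rule isCont_inverse_function2[of "(r0 + ?x)/2" ?x "(?x + rm)/2"])
       (use x in \<open>auto intro!: rH_P cP\<close>)
  then show ?thesis using x by simp
qed

definition phi where "phi q = 1 / (rhat q * sound G G1 H H1 q (rhat q))"
definition J where "J p = integral {p..p0} phi"
definition F where "F p = fk G G1 H H1 r0 p0 rhat p"

lemma F_le: "p \<le> p0 \<Longrightarrow> F p = - J p" by (simp add: F_def fk_def J_def phi_def[abs_def])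
lemma F_gt: "p > p0 \<Longrightarrow> F p = sqrt ((p - p0) * (1 / r0 - 1 / rH p))"
  by (simp add: F_def fk_def rH_def)

lemma rad_pos: assumes "q \<in> {0<..p0}"
  shows "(1 / rhat q + G1 (rhat q) / G (rhat q)) * (q - H (rhat q)) + q / rhat q * G (rhat q) + H1 (rhat q) > 0"
proof -
  let ?r = "rhat q"
  have r: "?r > 0" using rhpos[OF assms] .
  have Gp: "G ?r > 0" using G_pos[OF r] .
  have "(q - H ?r) / (G ?r * ?r) \<ge> 0" using rhe[OF assms] by (simp add: eint_def)
  then have qh: "q - H ?r \<ge> 0" using mult_pos_pos[OF Gp r] by (simp add: zero_le_divide_iff)
  have "1 / ?r + G1 ?r / G ?r = (G ?r + ?r * G1 ?r) / (?r * G ?r)" using r Gp by (simp add: field_simps)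
  also have "\<dots> \<ge> 0" using C1[OF r] r Gp by simp
  finally have a: "(1 / ?r + G1 ?r / G ?r) * (q - H ?r) \<ge> 0" using qh by simp
  have b: "q / ?r * G ?r > 0" using assms r Gp by simp
  show ?thesis using a b C3[OF r] by linarith
qed

lemma sound_pos: "q \<in> {0<..p0} \<Longrightarrow> sound G G1 H H1 q (rhat q) > 0"
  unfolding sound_def using rad_pos by simp

lemma phi_pos: "q \<in> {0<..p0} \<Longrightarrow> phi q > 0"
  unfolding phi_def using sound_pos rhpos by simp

lemma rhat_cont: "continuous_on {0<..p0} rhat"
  using drh DERIV_continuous continuous_on_eq_continuous_within by blast

lemma comp_cont: assumes "\<And>x. x > 0 \<Longrightarrow> isCont K x" shows "continuous_on {0<..p0} (\<lambda>q. K (rhat q))"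
proof -
  have "continuous_on {0<..} K" by (rule continuous_at_imp_continuous_on) (use assms in auto)
  moreover have "rhat ` {0<..p0} \<subseteq> {0<..}" using rhpos by auto
  ultimately show ?thesis by (rule continuous_on_compose2[OF _ rhat_cont])
qed

lemma phi_cont: "continuous_on {0<..p0} phi"
proof -
  have "continuous_on {0<..p0} (\<lambda>q. 1 / (rhat q * sqrt ((1 / rhat q + G1 (rhat q) / G (rhat q)) * (q - H (rhat q)) + q / rhat q * G (rhat q) + H1 (rhat q))))"
  proof -
    have "\<forall>q\<in>{0<..p0}. rhat q \<noteq> 0" "\<forall>q\<in>{0<..p0}. G (rhat q) \<noteq> 0"
      "\<forall>q\<in>{0<..p0}. rhat q * sound G G1 H H1 q (rhat q) \<noteq> 0"
      using rhpos G_pos sound_pos by (auto dest: rhpos) (metis less_irrefl rhpos G_pos, 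
        metis mult_pos_pos less_irrefl rhpos sound_pos)
    then show ?thesis unfolding sound_def
      by (intro continuous_intros rhat_cont comp_cont[of G, OF cG] comp_cont[of G1, OF cG1]
          comp_cont[of H, OF cH] comp_cont[of H1, OF cH1]) auto
  qed
  then show ?thesis unfolding phi_def[abs_def] sound_def .
qed

lemma phi_int': "0 < a \<Longrightarrow> b \<le> p0 \<Longrightarrow> phi integrable_on {a..b}"
  by (rule integrable_continuous_interval, rule continuous_on_subset[OF phi_cont]) auto


lemma int_pos: assumes "0 < a" "a < b" "b \<le> p0" shows "integral {a..b} phi > 0"
proof -
  have c: "continuous_on {a..b} phi" by (rule continuous_on_subset[OF phi_cont]) (use assms in auto)
  have "\<exists>x\<in>{a..b}. \<forall>y\<in>{a..b}. phi x \<le> phi y"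
    by (rule continuous_attains_inf[OF compact_Icc _ c]) (use assms in simp)
  then obtain x where x: "x \<in> {a..b}" "\<And>y. y \<in> {a..b} \<Longrightarrow> phi x \<le> phi y" by blast
  have xx: "x \<in> {0<..p0}" using x(1) assms by simp
  have m: "phi x > 0" using phi_pos[OF xx] .
  have "integral {a..b} (\<lambda>y. phi x) \<le> integral {a..b} phi"
    by (rule integral_le[OF integrable_const_ivl phi_int'[OF assms(1,3)] x(2)])
  moreover have "integral {a..b} (\<lambda>y. phi x) = (b - a) * phi x" using assms by simp
  moreover have "(b - a) * phi x > 0" using m assms by simp
  ultimately show ?thesis by linarith
qed

lemma J_strict: assumes "0 < a" "a < b" "b \<le> p0" shows "J b < J a"
proof -
  have "integral {a..b} phi + integral {b..p0} phi = integral {a..p0} phi"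
    by (rule Henstock_Kurzweil_Integration.integral_combine) (use assms phi_int' in auto)
  then show ?thesis using int_pos[OF assms] unfolding J_def by linarith
qed

lemma J_cont: "0 < a \<Longrightarrow> continuous_on {a..p0} J"
  unfolding J_def[abs_def] by (intro indefinite_integral_continuous_1' phi_int') auto


lemma J_p0: "J p0 = 0" by (simp add: J_def)

lemma J_nonneg: assumes "0 < p" "p \<le> p0" shows "J p \<ge> 0"
  using J_strict[of p p0] assms J_p0 by (cases "p = p0") auto

lemma J_anti: assumes "0 < p" "p \<le> q" "q \<le> p0" shows "J q \<le> J p"
  using J_strict[of p q] assms by (cases "p = q") auto

lemma F_pos: assumes "p > p0" shows "F p > 0"
proof -
  have "rH p > r0" using rH[OF assms] by simp
  then have "1 / rH p < 1 / r0" using r0 by (simp add: frac_less2)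
  then show ?thesis using assms F_gt by simp
qed

lemma F_strict: assumes "0 < a" "a < b" shows "F a < F b"
proof (cases "b \<le> p0")
  case True
  then show ?thesis using J_strict[OF assms True] F_le assms by simp
next
  case False
  note b = this
  show ?thesis
  proof (cases "a \<le> p0")
    case True
    then show ?thesis using F_le[OF True] J_nonneg[OF assms(1) True] F_pos[of b] b by simp
  next
    case False
    have ra: "rH a > r0" "rH a < rH b" using rH[of a] rH_strict[of a b] False assms by auto
    have "1 / rH b < 1 / rH a" using ra r0 by (simp add: frac_less2)
    moreover have "1 / rH a < 1 / r0" using ra r0 by (simp add: frac_less2)
    ultimately have "(a - p0) * (1 / r0 - 1 / rH a) < (b - p0) * (1 / r0 - 1 / rH b)"
      using False assms by (intro mult_strict_mono) auto
    then show ?thesis using F_gt False b by simp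
  qed
qed

lemma F_mono: assumes "0 < a" "a \<le> b" shows "F a \<le> F b"
  using F_strict[of a b] assms by (cases "a = b") auto

lemma F_cont_right: "continuous_on {p0..b} F"
proof -
  have "continuous (at x within {p0..b}) F" if x: "x \<in> {p0..b}" for x
  proof (cases "x = p0")
    case True
    have lim0: "((\<lambda>p. sqrt ((p - p0) / r0)) \<longlongrightarrow> 0) (at p0 within {p0..b})"
    proof -
      have "((\<lambda>p. sqrt ((p - p0) / r0)) \<longlongrightarrow> sqrt ((p0 - p0) / r0)) (at p0 within {p0..b})"
        using r0 by (intro tendsto_intros) auto
      then show ?thesis by simp
    qed
    have bnd: "norm (F p) \<le> sqrt ((p - p0) / r0)" if p: "p \<in> {p0..b}" for p
    proof (cases "p = p0")
      case True then show ?thesis using F_le J_p0 by simp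
    next
      case False
      then have pp: "p > p0" using p by simp
      have "rH p > 0" using rH[OF pp] r0 by simp
      then have "(p - p0) * (1 / r0 - 1 / rH p) \<le> (p - p0) / r0" using pp by (simp add: algebra_simps)
      then show ?thesis using F_gt[OF pp] F_pos[OF pp] by simp
    qed
    have "(F \<longlongrightarrow> 0) (at p0 within {p0..b})"
    proof (rule Lim_null_comparison[OF _ lim0])
      show "\<forall>\<^sub>F p in at p0 within {p0..b}. norm (F p) \<le> sqrt ((p - p0) / r0)"
        unfolding eventually_at_filter by (rule always_eventually) (use bnd in auto)
    qed
    then show ?thesis using True F_le J_p0 by (simp add: continuous_within)
  next
    case False
    then have xp: "x > p0" using x by simp
    have c: "isCont (\<lambda>p. sqrt ((p - p0) * (1 / r0 - 1 / rH p))) x"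
      using rH_cont[OF xp] rH[OF xp] r0 by (intro continuous_intros) auto
    have ev: "eventually (\<lambda>p. F p = sqrt ((p - p0) * (1 / r0 - 1 / rH p))) (nhds x)"
      using eventually_nhds_in_open[of "{p0<..}" x] xp F_gt
      by (auto elim!: eventually_mono)
    have "isCont F x" using isCont_cong[OF ev] c by simp
    then show ?thesis using continuous_at_imp_continuous_within by blast
  qed
  then show ?thesis using continuous_on_eq_continuous_within by blast
qed

lemma F_cont_left: assumes "0 < a" shows "continuous_on {a..p0} F"
proof -
  have "continuous_on {a..p0} (\<lambda>x. - J x)" using J_cont[OF assms] by (rule continuous_on_minus)
  then show ?thesis by (rule continuous_on_eq) (simp add: F_le)
qed

lemma F_cont: assumes "0 < a" shows "continuous_on {a..b} F"
proof (cases "b \<le> p0")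
  case True
  show ?thesis by (rule continuous_on_subset[OF F_cont_left[OF assms]]) (use True in auto)
next
  case False
  show ?thesis
  proof (cases "a \<le> p0")
    case True
    have "continuous_on ({a..p0} \<union> {p0..b}) F"
      by (intro continuous_on_closed_Un F_cont_left F_cont_right assms) auto
    moreover have "{a..b} \<subseteq> {a..p0} \<union> {p0..b}" by auto
    ultimately show ?thesis by (rule continuous_on_subset)
  next
    case False
    show ?thesis by (rule continuous_on_subset[OF F_cont_right[of b]]) (use False in auto)
  qed
qed

lemma F_unbounded: "\<exists>p>0. F p > M"
proof -
  define q1 where "q1 = p0 + 1"
  define d where "d = 1 / r0 - 1 / rH q1"
  have q1: "q1 > p0" by (simp add: q1_def)
  have "1 / rH q1 < 1 / r0" using rH[OF q1] r0 by (simp add: frac_less2)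
  then have d: "d > 0" by (simp add: d_def)
  define p where "p = q1 + M^2 / d"
  have pq: "p \<ge> q1" using d by (simp add: p_def)
  then have pp: "p > p0" using q1 by simp
  have "rH q1 \<le> rH p" using rH_strict[of q1 p] pq q1 by (cases "q1 = p") auto
  then have "1 / rH p \<ge> 0" "1 / rH p \<le> 1 / rH q1" using rH[OF q1] r0 by (auto simp: frac_le)
  then have dd: "1 / r0 - 1 / rH p \<ge> d" by (simp add: d_def)
  have "M^2 < (p - p0) * d" using d by (simp add: p_def q1_def field_simps)
  also have "\<dots> \<le> (p - p0) * (1 / r0 - 1 / rH p)" using dd pp by (intro mult_left_mono) auto
  finally have "M < F p" using F_gt[OF pp] by (simp add: real_less_rsqrt)
  then show ?thesis using pp p0 by (intro exI[of _ p]) auto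
qed


lemma Lint: assumes m: "0 < m" "m \<le> p0"
  shows "(\<lambda>i. ereal (J (m / real (Suc i)))) \<longlonglongrightarrow> Ik G G1 H H1 p0 rhat"
proof -
  define a where "a i = m / real (Suc i)" for i
  have a1: "0 < a i" for i using m by (simp add: a_def)
  have a2: "a i \<le> m" for i using m by (simp add: a_def divide_le_eq)
  have a: "0 < a i" "a i \<le> p0" for i using a1 a2[of i] m by auto
  have a_anti: "a j \<le> a i" if "i \<le> j" for i j using m that by (simp add: a_def frac_le)
  define f where "f i x = ennreal (phi x) * indicator {a i<..<p0} x" for i x
  have meas: "f i \<in> borel_measurable lborel" for i
  proof -
    have sub: "{a i<..<p0} \<subseteq> {0<..p0}" using a1[of i] by auto
    have "(\<lambda>x. indicator {a i<..<p0} x *\<^sub>R phi x) \<in> borel_measurable borel"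
      by (rule borel_measurable_continuous_on_indicator[OF _ continuous_on_subset[OF phi_cont sub]]) auto
    then have "(\<lambda>x. ennreal (indicator {a i<..<p0} x *\<^sub>R phi x)) \<in> borel_measurable borel"
      by (rule measurable_compose[OF _ measurable_ennreal])
    moreover have "(\<lambda>x. ennreal (indicator {a i<..<p0} x *\<^sub>R phi x)) = f i"
      by (auto simp: f_def indicator_def fun_eq_iff)
    ultimately show ?thesis by simp
  qed
  have inc: "incseq f" unfolding incseq_def le_fun_def
  proof (intro allI impI)
    fix i j :: nat and x assume ij: "i \<le> j"
    show "f i x \<le> f j x"
    proof (cases "x \<in> {a i<..<p0}")
      case True then have "x \<in> {a j<..<p0}" using a_anti[OF ij] by auto
      then show ?thesis using True by (simp add: f_def)
    next
      case False then show ?thesis by (simp add: f_def)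
    qed
  qed
  have sup: "(SUP i. f i x) = ennreal (phi x) * indicator {0<..<p0} x" for x
  proof (cases "x \<in> {0<..<p0}")
    case True
    then obtain n where n: "m / x < real n" using reals_Archimedean2 by blast
    have "a n < x"
    proof -
      have "m < x * real n" using n True by (simp add: divide_less_eq mult.commute)
      moreover have "x * real n \<le> x * real (Suc n)" using True by (intro mult_left_mono) auto
      ultimately have "m < x * real (Suc n)" by linarith
      then show ?thesis using True by (simp add: a_def divide_less_eq mult.commute)
    qed
    then have fn: "f n x = ennreal (phi x)" using True by (simp add: f_def)
    have "(SUP i. f i x) = ennreal (phi x)"
    proof (rule antisym)
      show "(SUP i. f i x) \<le> ennreal (phi x)" by (rule SUP_least) (simp add: f_def indicator_def)
      show "ennreal (phi x) \<le> (SUP i. f i x)" unfolding fn[symmetric] by (rule SUP_upper) simp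
    qed
    then show ?thesis using True by simp
  next
    case False
    have "x \<notin> {a i<..<p0}" for i using False a1[of i] by auto
    then have "f i x = 0" for i by (simp add: f_def)
    then show ?thesis using False by simp
  qed
  have fi: "integral\<^sup>N lborel (f i) = ennreal (J (a i))" for i
  proof -
    have "(phi has_integral J (a i)) {a i..p0}"
      unfolding J_def using phi_int'[OF a1[of i] order_refl] by (rule integrable_integral)
    then have "(phi has_integral J (a i)) {a i<..<p0}" by (simp add: has_integral_Icc_iff_Ioo)
    then show ?thesis unfolding f_def
      by (rule nn_integral_has_integral_lebesgue'[rotated]) (use phi_pos a1[of i] in \<open>force intro: less_imp_le\<close>)
  qed
  have Ik: "Ik G G1 H H1 p0 rhat = enn2ereal (SUP i. integral\<^sup>N lborel (f i))"
    unfolding Ik_def using nn_integral_monotone_convergence_SUP[OF inc meas]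
    by (simp add: sup phi_def)
  have inc2: "incseq (\<lambda>i. integral\<^sup>N lborel (f i))"
    using inc unfolding incseq_def by (auto intro: nn_integral_mono simp: le_fun_def)
  have "(\<lambda>i. enn2ereal (integral\<^sup>N lborel (f i))) \<longlonglongrightarrow> enn2ereal (SUP i. integral\<^sup>N lborel (f i))"
    using LIMSEQ_SUP[OF inc2] by (intro tendsto_enn2erealI)
  moreover have "enn2ereal (integral\<^sup>N lborel (f i)) = ereal (J (m / real (Suc i)))" for i
    using fi J_nonneg[OF a] by (simp add: a_def)
  ultimately show ?thesis using Ik by simp
qed

lemma J_le_Ik: assumes "0 < p" "p \<le> p0" shows "ereal (J p) \<le> Ik G G1 H H1 p0 rhat"
proof (rule LIMSEQ_le_const[OF Lint[OF assms]])
  show "\<exists>N. \<forall>n\<ge>N. ereal (J p) \<le> ereal (J (p / real (Suc n)))"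
  proof (intro exI allI impI)
    fix k :: nat assume "0 \<le> k"
    have "p / real (Suc k) \<le> p" using assms by (simp add: divide_le_eq)
    moreover have "p / real (Suc k) > 0" using assms by simp
    ultimately show "ereal (J p) \<le> ereal (J (p / real (Suc k)))" using J_anti assms by simp
  qed
qed


end

theorem theorem1:
  fixes Gl Gl1 Gl2 Hl Hl1 Hl2 Gr Gr1 Gr2 Hr Hr1 Hr2 rhatl rhatr :: "real \<Rightarrow> real"
    and Glinf Grinf \<rho>l \<rho>r pl pr ul ur :: real
  assumes "eos_assms Gl Gl1 Gl2 Glinf Hl Hl1 Hl2"
    and "eos_assms Gr Gr1 Gr2 Grinf Hr Hr1 Hr2"
    and "side_assms Gl Gl1 Hl Hl1 \<rho>l pl rhatl"
    and "side_assms Gr Gr1 Hr Hr1 \<rho>r pr rhatr"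
  shows "(\<exists>!p. 0 < p \<and> fk Gl Gl1 Hl Hl1 \<rho>l pl rhatl p + fk Gr Gr1 Hr Hr1 \<rho>r pr rhatr p + ur - ul = 0)
     \<longleftrightarrow> ereal (ur - ul) < Ik Gl Gl1 Hl Hl1 pl rhatl + Ik Gr Gr1 Hr Hr1 pr rhatr"
proof -
  interpret L: side Gl Gl1 Gl2 Glinf Hl Hl1 Hl2 \<rho>l pl rhatl
    by unfold_locales (fact assms)+
  interpret R: side Gr Gr1 Gr2 Grinf Hr Hr1 Hr2 \<rho>r pr rhatr
    by unfold_locales (fact assms)+
  define c where "c = ur - ul"
  define f where "f p = L.F p + R.F p + c" for p
  have feq: "fk Gl Gl1 Hl Hl1 \<rho>l pl rhatl p + fk Gr Gr1 Hr Hr1 \<rho>r pr rhatr p + ur - ul = f p" for p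
    by (simp add: f_def c_def L.F_def R.F_def)
  have fstrict: "f a < f b" if "0 < a" "a < b" for a b
    using L.F_strict[OF that] R.F_strict[OF that] by (simp add: f_def)
  have fmono: "f a \<le> f b" if "0 < a" "a \<le> b" for a b
    using L.F_mono[OF that] R.F_mono[OF that] by (simp add: f_def)
  have fcont: "continuous_on {a..b} f" if "0 < a" for a b
    unfolding f_def[abs_def] using L.F_cont[OF that] R.F_cont[OF that]
    by (intro continuous_on_add continuous_on_const)
  define m where "m = min pl pr"
  have m: "0 < m" "m \<le> pl" "m \<le> pr" using L.p0 R.p0 by (auto simp: m_def)
  have fJ: "f p = c - L.J p - R.J p" if "p \<le> m" for p
    using that m L.F_le[of p] R.F_le[of p] by (simp add: f_def)
  have key: "(\<exists>p>0. f p < 0) \<longleftrightarrow> ereal c < Ik Gl Gl1 Hl Hl1 pl rhatl + Ik Gr Gr1 Hr Hr1 pr rhatr"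
  proof
    assume "\<exists>p>0. f p < 0"
    then obtain p where p: "p > 0" "f p < 0" by blast
    define q where "q = min p m"
    have q: "0 < q" "q \<le> p" "q \<le> m" using p m by (auto simp: q_def)
    have "f q < 0" using fmono[OF q(1,2)] p by simp
    then have "c < L.J q + R.J q" using fJ[OF q(3)] by simp
    then have "ereal c < ereal (L.J q) + ereal (R.J q)" by simp
    also have "\<dots> \<le> Ik Gl Gl1 Hl Hl1 pl rhatl + Ik Gr Gr1 Hr Hr1 pr rhatr"
      using L.J_le_Ik[of q] R.J_le_Ik[of q] q m by (intro add_mono) auto
    finally show "ereal c < Ik Gl Gl1 Hl Hl1 pl rhatl + Ik Gr Gr1 Hr Hr1 pr rhatr" .
  next
    assume lt: "ereal c < Ik Gl Gl1 Hl Hl1 pl rhatl + Ik Gr Gr1 Hr Hr1 pr rhatr"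
    have nl: "Ik Gl Gl1 Hl Hl1 pl rhatl \<noteq> - \<infinity>" unfolding Ik_def
      using enn2ereal_nonneg[of "\<integral>\<^sup>+ q\<in>{0<..<pl}. ennreal (1 / (rhatl q * sound Gl Gl1 Hl Hl1 q (rhatl q))) \<partial>lborel"] by auto
    have nr: "Ik Gr Gr1 Hr Hr1 pr rhatr \<noteq> - \<infinity>" unfolding Ik_def
      using enn2ereal_nonneg[of "\<integral>\<^sup>+ q\<in>{0<..<pr}. ennreal (1 / (rhatr q * sound Gr Gr1 Hr Hr1 q (rhatr q))) \<partial>lborel"] by auto
    have tl: "(\<lambda>i. ereal (L.J (m / real (Suc i))) + ereal (R.J (m / real (Suc i))))
        \<longlonglongrightarrow> Ik Gl Gl1 Hl Hl1 pl rhatl + Ik Gr Gr1 Hr Hr1 pr rhatr"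
      by (rule tendsto_add_ereal_nonneg[OF nl nr L.Lint[OF m(1,2)] R.Lint[OF m(1,3)]])
    have "\<forall>\<^sub>F i in sequentially. ereal c < ereal (L.J (m / real (Suc i))) + ereal (R.J (m / real (Suc i)))"
      by (rule order_tendstoD(1)[OF tl lt])
    then obtain N where "\<forall>n\<ge>N. ereal c < ereal (L.J (m / real (Suc n))) + ereal (R.J (m / real (Suc n)))"
      unfolding eventually_sequentially by blast
    then have "ereal c < ereal (L.J (m / real (Suc N))) + ereal (R.J (m / real (Suc N)))" by blast
    then have "c < L.J (m / real (Suc N)) + R.J (m / real (Suc N))" by simp
    moreover have "m / real (Suc N) \<le> m" using m by (simp add: divide_le_eq)
    moreover have "m / real (Suc N) > 0" using m by simp
    ultimately show "\<exists>p>0. f p < 0" using fJ by (intro exI[of _ "m / real (Suc N)"]) auto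
  qed
  have main: "(\<exists>!p. 0 < p \<and> f p = 0) \<longleftrightarrow> (\<exists>p>0. f p < 0)"
  proof
    assume "\<exists>!p. 0 < p \<and> f p = 0"
    then obtain p where p: "0 < p" "f p = 0" by blast
    have "f (p/2) < f p" using p by (intro fstrict) auto
    then show "\<exists>p>0. f p < 0" using p by (intro exI[of _ "p/2"]) auto
  next
    assume "\<exists>p>0. f p < 0"
    then obtain a where a: "0 < a" "f a < 0" by blast
    obtain p1 where p1: "p1 > 0" "L.F p1 > - c - R.F 1" using L.F_unbounded by blast
    define b where "b = max p1 (max 1 a)"
    have b: "p1 \<le> b" "1 \<le> b" "a \<le> b" by (auto simp: b_def)
    have "f b > 0" using L.F_mono[OF p1(1) b(1)] R.F_mono[OF _ b(2)] p1 by (simp add: f_def)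
    then obtain x where x: "a \<le> x" "x \<le> b" "f x = 0"
      using IVT'[of f a 0 b] a b fcont[OF a(1)] by auto
    show "\<exists>!p. 0 < p \<and> f p = 0"
    proof (rule ex1I[of _ x])
      show "0 < x \<and> f x = 0" using x a by simp
    next
      fix y assume y: "0 < y \<and> f y = 0"
      show "y = x"
      proof (rule ccontr)
        assume "y \<noteq> x"
        then have "y < x \<or> x < y" by auto
        then show False using fstrict[of y x] fstrict[of x y] x y a by auto
      qed
    qed
  qed
  show ?thesis unfolding feq using main key by (simp add: c_def)
qed


end
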